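(* Let $m\ge1$, $m_\alpha\ge1$ be integers, $f_0\ne f_1$ probability densities on $\mathbb{R}$, and consider the change-point model, the statistics $S_n=\sum_{i=n-m+1}^n \ln\big(f_1(x_i)/f_0(x_i)\big)$ ($n\ge m$) and the FMA stopping time $T_{\mathrm{F}}(h)=\inf\{n\ge m: S_n\ge h\}$ described in the context. Let $F_0$ be the cumulative distribution function of $S_m=\sum_{i=1}^m\ln\big(f_1(x_i)/f_0(x_i)\big)$ under $\mathbb{P}_\infty$ and $F_1$ its cumulative distribution function under $\mathbb{P}_1$, and assume $F_0$ is invertible with inverse $F_0^{-1}$. Let $\tilde\alpha\in(0,1)$ and set $$h(\tilde\alpha)=F_0^{-1}\Big[(1-\tilde\alpha)^{1/m_\alpha}\Big].$$ Then $\mathbb{P}_{\mathrm{fa}}\big(T_{\mathrm{F}}(h(\tilde\alpha)),m_\alpha\big)\le\tilde\alpha$, and the missed-detection bound $\beta(h,m)=\mathbb{P}_1(S_m<h)$ evaluated at this threshold equals $$\beta\big(h(\tilde\alpha),m\big)=F_1\Big[F_0^{-1}\big[(1-\tilde\alpha)^{1/m_\alpha}\big]\Big].$$ Moreover, if $\tilde h$ is the threshold such that $\mathbb{P}_{\mathrm{fa}}\big(T_{\mathrm{F}}(\tilde h),m_\alpha\big)=\tilde\alpha$, then $$\mathbb{P}_{\mathrm{md}}\big(T_{\mathrm{F}}(\tilde h),m\big)\le\beta\big(h(\tilde\alpha),m\big).$$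
   Context: Change-point model: for each $v\in\{1,2,\dots\}\cup\{\infty\}$, $\mathbb{P}_v$ is a probability measure under which $x_1,x_2,\dots$ are mutually independent, $x_n$ has density $f_0$ if $n<v$ or $n\ge v+m$, and density $f_1$ if $v\le n<v+m$. Log-likelihood ratios are assumed to be well-defined real random variables. For a stopping time $T$: $\mathbb{P}_{\mathrm{fa}}(T,m_\alpha)=\sup_{l\ge1}\mathbb{P}_\infty(l\le T<l+m_\alpha)$ and $\mathbb{P}_{\mathrm{md}}(T,m)=\sup_{v\ge1}\mathbb{P}_v(T\ge v+m\mid T\ge v)$. *)

theory Defs
  imports "HOL-Probability.Probability"
begin

text \<open>Change-point model. Observations are indexed by positive naturals (index 0 is an
unused dummy coordinate, distributed by f0). The change time v ranges over enat,
with \<infinity> meaning "no change".\<close>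

definition obs_density :: "(real \<Rightarrow> real) \<Rightarrow> (real \<Rightarrow> real) \<Rightarrow> nat \<Rightarrow> enat \<Rightarrow> nat \<Rightarrow> real \<Rightarrow> real" where
  "obs_density f0 f1 m v n = (if v \<le> enat n \<and> enat n < v + enat m then f1 else f0)"

definition P_cp :: "(real \<Rightarrow> real) \<Rightarrow> (real \<Rightarrow> real) \<Rightarrow> nat \<Rightarrow> enat \<Rightarrow> (nat \<Rightarrow> real) measure" where
  "P_cp f0 f1 m v =
     PiM UNIV (\<lambda>n. density lborel (\<lambda>t. ennreal (obs_density f0 f1 m v n t)))"

definition llr :: "(real \<Rightarrow> real) \<Rightarrow> (real \<Rightarrow> real) \<Rightarrow> real \<Rightarrow> real" where
  "llr f0 f1 t = ln (f1 t / f0 t)"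

definition S_stat :: "(real \<Rightarrow> real) \<Rightarrow> (real \<Rightarrow> real) \<Rightarrow> nat \<Rightarrow> nat \<Rightarrow> (nat \<Rightarrow> real) \<Rightarrow> real" where
  "S_stat f0 f1 m n x = (\<Sum>i\<in>{n + 1 - m..n}. llr f0 f1 (x i))"

text \<open>FMA stopping time; inf of the empty set is \<infinity>.\<close>
definition T_FMA :: "(real \<Rightarrow> real) \<Rightarrow> (real \<Rightarrow> real) \<Rightarrow> nat \<Rightarrow> real \<Rightarrow> (nat \<Rightarrow> real) \<Rightarrow> enat" where
  "T_FMA f0 f1 m h x = Inf {enat n | n. m \<le> n \<and> h \<le> S_stat f0 f1 m n x}"

definition P_fa :: "(enat \<Rightarrow> (nat \<Rightarrow> real) measure) \<Rightarrow> ((nat \<Rightarrow> real) \<Rightarrow> enat) \<Rightarrow> nat \<Rightarrow> real" where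
  "P_fa P T ma = (SUP l\<in>{1::nat..}.
      measure (P \<infinity>) {x \<in> space (P \<infinity>). enat l \<le> T x \<and> T x < enat (l + ma)})"

definition P_md :: "(enat \<Rightarrow> (nat \<Rightarrow> real) measure) \<Rightarrow> ((nat \<Rightarrow> real) \<Rightarrow> enat) \<Rightarrow> nat \<Rightarrow> real" where
  "P_md P T m = (SUP v\<in>{1::nat..}.
      measure (P (enat v)) {x \<in> space (P (enat v)). enat (v + m) \<le> T x}
      / measure (P (enat v)) {x \<in> space (P (enat v)). enat v \<le> T x})"

definition F0_cdf :: "(real \<Rightarrow> real) \<Rightarrow> (real \<Rightarrow> real) \<Rightarrow> nat \<Rightarrow> real \<Rightarrow> real" where
  "F0_cdf f0 f1 m t = measure (P_cp f0 f1 m \<infinity>)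
      {x \<in> space (P_cp f0 f1 m \<infinity>). S_stat f0 f1 m m x \<le> t}"

definition F1_cdf :: "(real \<Rightarrow> real) \<Rightarrow> (real \<Rightarrow> real) \<Rightarrow> nat \<Rightarrow> real \<Rightarrow> real" where
  "F1_cdf f0 f1 m t = measure (P_cp f0 f1 m (enat 1))
      {x \<in> space (P_cp f0 f1 m (enat 1)). S_stat f0 f1 m m x \<le> t}"

definition beta_md :: "(real \<Rightarrow> real) \<Rightarrow> (real \<Rightarrow> real) \<Rightarrow> nat \<Rightarrow> real \<Rightarrow> real" where
  "beta_md f0 f1 m h = measure (P_cp f0 f1 m (enat 1))
      {x \<in> space (P_cp f0 f1 m (enat 1)). S_stat f0 f1 m m x < h}"

definition h_thr :: "(real \<Rightarrow> real) \<Rightarrow> (real \<Rightarrow> real) \<Rightarrow> nat \<Rightarrow> nat \<Rightarrow> real \<Rightarrow> real" where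
  "h_thr f0 f1 m ma a = inv (F0_cdf f0 f1 m) ((1 - a) powr (1 / real ma))"

end

theory Submission
  imports Defs
begin


lemma ennreal_rearr:
  fixes a b c d :: ennreal
  assumes "a \<le> b" "c \<le> d"
  shows "a * d + b * c \<le> a * c + b * d"
proof -
  obtain p where p: "b = a + p" using assms(1) le_iff_add by blast
  obtain q where q: "d = c + q" using assms(2) le_iff_add by blast
  show ?thesis unfolding p q by (simp add: algebra_simps)
qed

lemma ennreal_half_cancel:
  fixes x y :: ennreal
  assumes "x + x \<le> y + y" shows "x \<le> y"
  using assms by (meson add_strict_mono leD le_less_linear)

lemma cheb1:
  fixes N :: "'a measure" and f g :: "'a \<Rightarrow> ennreal" and w :: "'a \<Rightarrow> real"
  assumes "prob_space N" and [measurable]: "f \<in> borel_measurable N" "g \<in> borel_measurable N"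
    and mf: "\<And>a b. w a \<le> w b \<Longrightarrow> f a \<le> f b" and mg: "\<And>a b. w a \<le> w b \<Longrightarrow> g a \<le> g b"
  shows "(\<integral>\<^sup>+x. f x \<partial>N) * (\<integral>\<^sup>+x. g x \<partial>N) \<le> (\<integral>\<^sup>+x. f x * g x \<partial>N)"
proof -
  interpret prob_space N by fact
  define F where "F = (\<integral>\<^sup>+x. f x \<partial>N)"
  define G where "G = (\<integral>\<^sup>+x. g x \<partial>N)"
  define H where "H = (\<integral>\<^sup>+x. f x * g x \<partial>N)"
  have r: "f a * g b + f b * g a \<le> f a * g a + f b * g b" for a b
  proof (cases "w a \<le> w b")
    case True then show ?thesis using ennreal_rearr[OF mf[OF True] mg[OF True]] by simp
  next
    case False then have "w b \<le> w a" by simp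
    then show ?thesis using ennreal_rearr[OF mf mg, of b a] by (simp add: add_ac)
  qed
  have step: "g b * F + f b * G \<le> H + f b * g b" for b
  proof -
    have "g b * F + f b * G = (\<integral>\<^sup>+a. f a * g b + f b * g a \<partial>N)"
      unfolding F_def G_def
      by (simp add: nn_integral_add nn_integral_cmult nn_integral_multc mult.commute)
    also have "\<dots> \<le> (\<integral>\<^sup>+a. f a * g a + f b * g b \<partial>N)" by (intro nn_integral_mono r)
    also have "\<dots> = H + f b * g b" unfolding H_def
      by (simp add: nn_integral_add emeasure_space_1)
    finally show ?thesis .
  qed
  have "(\<integral>\<^sup>+b. g b * F + f b * G \<partial>N) \<le> (\<integral>\<^sup>+b. H + f b * g b \<partial>N)"
    by (intro nn_integral_mono step)
  moreover have "(\<integral>\<^sup>+b. g b * F + f b * G \<partial>N) = F * G + F * G"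
    unfolding F_def G_def
    by (simp add: nn_integral_add nn_integral_cmult nn_integral_multc mult.commute)
  moreover have "(\<integral>\<^sup>+b. H + f b * g b \<partial>N) = H + H"
    unfolding H_def by (simp add: nn_integral_add emeasure_space_1)
  ultimately have "F * G + F * G \<le> H + H" by simp
  then show ?thesis unfolding F_def G_def H_def by (rule ennreal_half_cancel)
qed

lemma harris:
  fixes M :: "nat \<Rightarrow> real measure" and w :: "nat \<Rightarrow> real \<Rightarrow> real"
    and f g :: "(nat \<Rightarrow> real) \<Rightarrow> ennreal"
  assumes M: "\<And>i. prob_space (M i)" and J: "finite J"
    and fm: "f \<in> borel_measurable (PiM J M)" and gm: "g \<in> borel_measurable (PiM J M)"
    and mf: "\<And>x y. (\<forall>i\<in>J. w i (x i) \<le> w i (y i)) \<Longrightarrow> f x \<le> f y"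
    and mg: "\<And>x y. (\<forall>i\<in>J. w i (x i) \<le> w i (y i)) \<Longrightarrow> g x \<le> g y"
  shows "(\<integral>\<^sup>+x. f x \<partial>PiM J M) * (\<integral>\<^sup>+x. g x \<partial>PiM J M) \<le> (\<integral>\<^sup>+x. f x * g x \<partial>PiM J M)"
  using J fm gm mf mg
proof (induction J arbitrary: f g rule: finite_induct)
  case empty
  show ?case by (simp add: PiM_empty nn_integral_count_space_finite)
next
  case (insert i J)
  interpret product_prob_space M by (intro product_prob_spaceI M)
  note fm[measurable] = insert.prems(1) and gm[measurable] = insert.prems(2)
  define F where "F y = (\<integral>\<^sup>+z. f (y(i:=z)) \<partial>M i)" for y
  define G where "G y = (\<integral>\<^sup>+z. g (y(i:=z)) \<partial>M i)" for y
  have Fm: "F \<in> borel_measurable (PiM J M)" unfolding F_def by measurable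
  have Gm: "G \<in> borel_measurable (PiM J M)" unfolding G_def by measurable
  have upd: "\<forall>j\<in>insert i J. w j ((x(i:=z)) j) \<le> w j ((y(i:=z)) j)"
    if "\<forall>j\<in>J. w j (x j) \<le> w j (y j)" for x y z using that by auto
  have mF: "F x \<le> F y" if "\<forall>j\<in>J. w j (x j) \<le> w j (y j)" for x y
    unfolding F_def by (intro nn_integral_mono insert.prems(3) upd that)
  have mG: "G x \<le> G y" if "\<forall>j\<in>J. w j (x j) \<le> w j (y j)" for x y
    unfolding G_def by (intro nn_integral_mono insert.prems(4) upd that)
  have IH: "(\<integral>\<^sup>+x. F x \<partial>PiM J M) * (\<integral>\<^sup>+x. G x \<partial>PiM J M) \<le> (\<integral>\<^sup>+x. F x * G x \<partial>PiM J M)"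
    by (rule insert.IH[OF Fm Gm mF mG])
  have "(\<integral>\<^sup>+x. F x * G x \<partial>PiM J M) \<le> (\<integral>\<^sup>+y. (\<integral>\<^sup>+z. f (y(i:=z)) * g (y(i:=z)) \<partial>M i) \<partial>PiM J M)"
  proof (intro nn_integral_mono)
    fix y assume y: "y \<in> space (PiM J M)"
    have um: "(\<lambda>v. y(i := v)) \<in> measurable (M i) (Pi\<^sub>M (insert i J) M)"
      by (rule measurable_component_update[OF y insert.hyps(2)])
    have mono1: "w i a \<le> w i b \<Longrightarrow> \<forall>j\<in>insert i J. w j ((y(i:=a)) j) \<le> w j ((y(i:=b)) j)" for a b
      by auto
    show "F y * G y \<le> (\<integral>\<^sup>+z. f (y(i:=z)) * g (y(i:=z)) \<partial>M i)"
    proof -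
      have "(\<lambda>z. f (y(i:=z))) \<in> borel_measurable (M i)"
        using measurable_comp[OF um fm] by (simp add: comp_def)
      moreover have "(\<lambda>z. g (y(i:=z))) \<in> borel_measurable (M i)"
        using measurable_comp[OF um gm] by (simp add: comp_def)
      ultimately show ?thesis
        unfolding F_def G_def
        by (rule cheb1[where w="w i", OF M]) (auto intro!: insert.prems(3,4) mono1)
    qed
  qed
  also have "\<dots> = (\<integral>\<^sup>+x. f x * g x \<partial>PiM (insert i J) M)"
    by (rule product_nn_integral_insert[symmetric]) (use insert.hyps in auto)
  finally have A: "(\<integral>\<^sup>+x. F x \<partial>PiM J M) * (\<integral>\<^sup>+x. G x \<partial>PiM J M) \<le> (\<integral>\<^sup>+x. f x * g x \<partial>PiM (insert i J) M)"
    using IH by simp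
  have "(\<integral>\<^sup>+x. f x \<partial>PiM (insert i J) M) = (\<integral>\<^sup>+x. F x \<partial>PiM J M)"
    unfolding F_def by (rule product_nn_integral_insert) (use insert.hyps in auto)
  moreover have "(\<integral>\<^sup>+x. g x \<partial>PiM (insert i J) M) = (\<integral>\<^sup>+x. G x \<partial>PiM J M)"
    unfolding G_def by (rule product_nn_integral_insert) (use insert.hyps in auto)
  ultimately show ?case using A by simp
qed




lemma harris_sets:
  fixes M :: "nat \<Rightarrow> real measure" and w :: "nat \<Rightarrow> real \<Rightarrow> real"
  assumes M: "\<And>i. prob_space (M i)" and J: "finite J"
    and SP: "{x\<in>space (PiM J M). P x} \<in> sets (PiM J M)"
    and SQ: "{x\<in>space (PiM J M). Q x} \<in> sets (PiM J M)"
    and mP: "\<And>x y. (\<forall>i\<in>J. w i (x i) \<le> w i (y i)) \<Longrightarrow> P x \<Longrightarrow> P y"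
    and mQ: "\<And>x y. (\<forall>i\<in>J. w i (x i) \<le> w i (y i)) \<Longrightarrow> Q x \<Longrightarrow> Q y"
  shows "emeasure (PiM J M) {x\<in>space (PiM J M). P x} * emeasure (PiM J M) {x\<in>space (PiM J M). Q x}
    \<le> emeasure (PiM J M) {x\<in>space (PiM J M). P x \<and> Q x}"
proof -
  let ?S = "space (PiM J M)"
  have ind: "(\<integral>\<^sup>+x. indicator {x. R x} x \<partial>PiM J M) = emeasure (PiM J M) {x\<in>?S. R x}"
    if "{x\<in>?S. R x} \<in> sets (PiM J M)" for R
  proof -
    have "(\<integral>\<^sup>+x. indicator {x. R x} x \<partial>PiM J M) = (\<integral>\<^sup>+x. indicator {x\<in>?S. R x} x \<partial>PiM J M)"
      by (intro nn_integral_cong) (auto split: split_indicator)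
    also have "\<dots> = emeasure (PiM J M) {x\<in>?S. R x}" using that by simp
    finally show ?thesis .
  qed
  have meas: "(\<lambda>x. indicator {x. R x} x :: ennreal) \<in> borel_measurable (PiM J M)"
    if "{x\<in>?S. R x} \<in> sets (PiM J M)" for R
  proof -
    have "(\<lambda>x. indicator {x\<in>?S. R x} x :: ennreal) \<in> borel_measurable (PiM J M)"
      using that by simp
    then show ?thesis
      by (rule measurable_cong[THEN iffD1, rotated]) (auto split: split_indicator)
  qed
  have SPQ: "{x\<in>?S. P x \<and> Q x} \<in> sets (PiM J M)"
    proof -
    have "{x\<in>?S. P x \<and> Q x} = {x\<in>?S. P x} \<inter> {x\<in>?S. Q x}" by auto
    then show ?thesis using sets.Int[OF SP SQ] by simp
  qed
  have "(\<integral>\<^sup>+x. indicator {x. P x} x \<partial>PiM J M) * (\<integral>\<^sup>+x. indicator {x. Q x} x \<partial>PiM J M)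
      \<le> (\<integral>\<^sup>+x. indicator {x. P x} x * indicator {x. Q x} x \<partial>PiM J M)"
    by (rule harris[OF M J meas[OF SP] meas[OF SQ]])
       (auto split: split_indicator dest: mP mQ)
  also have "\<dots> = (\<integral>\<^sup>+x. indicator {x. P x \<and> Q x} x \<partial>PiM J M)"
    by (intro nn_integral_cong) (auto split: split_indicator)
  finally show ?thesis using ind[OF SP] ind[OF SQ] ind[OF SPQ] by simp
qed

lemma harris_prod:
  fixes M :: "nat \<Rightarrow> real measure" and w :: "nat \<Rightarrow> real \<Rightarrow> real"
    and P :: "nat \<Rightarrow> (nat \<Rightarrow> real) \<Rightarrow> bool"
  assumes M: "\<And>i. prob_space (M i)" and J: "finite J" and W: "finite W"
    and SP: "\<And>n. n \<in> W \<Longrightarrow> {x\<in>space (PiM J M). P n x} \<in> sets (PiM J M)"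
    and mP: "\<And>n x y. n \<in> W \<Longrightarrow> (\<forall>i\<in>J. w i (x i) \<le> w i (y i)) \<Longrightarrow> P n x \<Longrightarrow> P n y"
  shows "(\<Prod>n\<in>W. emeasure (PiM J M) {x\<in>space (PiM J M). P n x})
    \<le> emeasure (PiM J M) {x\<in>space (PiM J M). \<forall>n\<in>W. P n x}"
  using W SP mP
proof (induction W rule: finite_induct)
  case empty
  interpret prob_space "PiM J M" by (intro prob_space_PiM M)
  show ?case by (simp add: emeasure_space_1)
next
  case (insert n W)
  have S: "{x\<in>space (PiM J M). \<forall>k\<in>W. P k x} \<in> sets (PiM J M)"
    by (rule sets.sets_Collect_finite_All) (use insert in auto)
  have "(\<Prod>k\<in>insert n W. emeasure (PiM J M) {x\<in>space (PiM J M). P k x})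
     = emeasure (PiM J M) {x\<in>space (PiM J M). P n x} * (\<Prod>k\<in>W. emeasure (PiM J M) {x\<in>space (PiM J M). P k x})"
    using insert by simp
  also have "\<dots> \<le> emeasure (PiM J M) {x\<in>space (PiM J M). P n x} * emeasure (PiM J M) {x\<in>space (PiM J M). \<forall>k\<in>W. P k x}"
    by (intro mult_left_mono insert.IH) (use insert.prems in auto)
  also have "\<dots> \<le> emeasure (PiM J M) {x\<in>space (PiM J M). P n x \<and> (\<forall>k\<in>W. P k x)}"
    by (rule harris_sets[OF M J insert.prems(1) S, where w=w]) (use insert.prems in blast)+
  also have "{x\<in>space (PiM J M). P n x \<and> (\<forall>k\<in>W. P k x)} = {x\<in>space (PiM J M). \<forall>k\<in>insert n W. P k x}"
    by auto
  finally show ?case .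
qed

lemma transfer_fin:
  fixes M :: "nat \<Rightarrow> 'a measure"
  assumes M: "\<And>i. prob_space (M i)" and J: "finite J"
    and dep: "\<And>x. \<Phi> (restrict x J) = \<Phi> x"
    and S: "{y\<in>space (PiM J M). \<Phi> y} \<in> sets (PiM J M)"
  shows "emeasure (PiM UNIV M) {x\<in>space (PiM UNIV M). \<Phi> x} = emeasure (PiM J M) {y\<in>space (PiM J M). \<Phi> y}"
proof -
  interpret product_prob_space M UNIV by (intro product_prob_spaceI M)
  have "{x\<in>space (PiM UNIV M). \<Phi> x} = prod_emb UNIV M J {y\<in>space (PiM J M). \<Phi> y}"
    unfolding prod_emb_def using dep by (auto simp: space_PiM PiE_iff)
  then show ?thesis using emeasure_PiM_emb'[OF subset_UNIV J S] by simp
qed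

lemma shift_PiM:
  fixes M :: "nat \<Rightarrow> 'a measure"
  assumes M: "\<And>i. prob_space (M i)"
    and S: "{y\<in>space (PiM UNIV (\<lambda>i. M (i+k))). \<Phi> y} \<in> sets (PiM UNIV (\<lambda>i. M (i+k)))"
  shows "emeasure (PiM UNIV M) {x\<in>space (PiM UNIV M). \<Phi> (\<lambda>i. x (i+k))}
     = emeasure (PiM UNIV (\<lambda>i. M (i+k))) {y\<in>space (PiM UNIV (\<lambda>i. M (i+k))). \<Phi> y}"
proof -
  have D: "distr (PiM UNIV M) (PiM UNIV (\<lambda>i. M (i+k))) (\<lambda>\<omega>. \<lambda>n\<in>UNIV. \<omega> (n+k)) = PiM UNIV (\<lambda>i. M (i+k))"
    by (rule distr_PiM_reindex) (auto simp: M inj_on_def)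
  have mt: "(\<lambda>\<omega>. \<lambda>n\<in>UNIV. \<omega> (n+k)) \<in> measurable (PiM UNIV M) (PiM UNIV (\<lambda>i. M (i+k)))"
    by (intro measurable_restrict measurable_component_singleton) auto
  have "emeasure (PiM UNIV (\<lambda>i. M (i+k))) {y\<in>space (PiM UNIV (\<lambda>i. M (i+k))). \<Phi> y}
      = emeasure (distr (PiM UNIV M) (PiM UNIV (\<lambda>i. M (i+k))) (\<lambda>\<omega>. \<lambda>n\<in>UNIV. \<omega> (n+k))) {y\<in>space (PiM UNIV (\<lambda>i. M (i+k))). \<Phi> y}"
    using D by simp
  also have "\<dots> = emeasure (PiM UNIV M) ((\<lambda>\<omega>. \<lambda>n\<in>UNIV. \<omega> (n+k)) -` {y\<in>space (PiM UNIV (\<lambda>i. M (i+k))). \<Phi> y} \<inter> space (PiM UNIV M))"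
    by (rule emeasure_distr[OF mt S])
  also have "(\<lambda>\<omega>. \<lambda>n\<in>UNIV. \<omega> (n+k)) -` {y\<in>space (PiM UNIV (\<lambda>i. M (i+k))). \<Phi> y} \<inter> space (PiM UNIV M)
      = {x\<in>space (PiM UNIV M). \<Phi> (\<lambda>i. x (i+k))}"
    using measurable_space[OF mt] by (auto simp: restrict_def)
  finally show ?thesis ..
qed




lemma indep_fin:
  fixes M :: "nat \<Rightarrow> 'a measure"
  assumes M: "\<And>i. prob_space (M i)" and I: "finite I" and J: "finite J" and IJ: "I \<inter> J = {}"
    and d1: "\<And>x. \<Phi>1 (restrict x I) = \<Phi>1 x" and d2: "\<And>x. \<Phi>2 (restrict x J) = \<Phi>2 x"
    and S1: "{y\<in>space (PiM I M). \<Phi>1 y} \<in> sets (PiM I M)"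
    and S2: "{y\<in>space (PiM J M). \<Phi>2 y} \<in> sets (PiM J M)"
    and S12: "{y\<in>space (PiM (I\<union>J) M). \<Phi>1 y \<and> \<Phi>2 y} \<in> sets (PiM (I\<union>J) M)"
  shows "emeasure (PiM UNIV M) {x\<in>space (PiM UNIV M). \<Phi>1 x \<and> \<Phi>2 x}
    = emeasure (PiM UNIV M) {x\<in>space (PiM UNIV M). \<Phi>1 x} * emeasure (PiM UNIV M) {x\<in>space (PiM UNIV M). \<Phi>2 x}"
proof -
  interpret product_prob_space M UNIV by (rule product_prob_spaceI[OF M])
  have r1: "\<Phi>1 (restrict x (I\<union>J)) = \<Phi>1 x" for x
    using d1[of "restrict x (I\<union>J)"] d1[of x] by (simp add: Int_absorb1)
  have r2: "\<Phi>2 (restrict x (I\<union>J)) = \<Phi>2 x" for x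
    using d2[of "restrict x (I\<union>J)"] d2[of x] by (simp add: Int_absorb1)
  have "emeasure (PiM UNIV M) {x\<in>space (PiM UNIV M). \<Phi>1 x \<and> \<Phi>2 x}
     = emeasure (PiM (I\<union>J) M) {y\<in>space (PiM (I\<union>J) M). \<Phi>1 y \<and> \<Phi>2 y}"
    by (rule transfer_fin[OF M]) (use I J S12 r1 r2 in auto)
  also have "\<dots> = (\<integral>\<^sup>+x. emeasure (PiM J M) ((\<lambda>y. merge I J (x, y)) -` {y\<in>space (PiM (I\<union>J) M). \<Phi>1 y \<and> \<Phi>2 y} \<inter> space (PiM J M)) \<partial>PiM I M)"
    by (rule emeasure_fold_integral[OF IJ I J S12])
  also have "\<dots> = (\<integral>\<^sup>+x. emeasure (PiM J M) {y\<in>space (PiM J M). \<Phi>2 y} * indicator {y\<in>space (PiM I M). \<Phi>1 y} x \<partial>PiM I M)"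
  proof (intro nn_integral_cong)
    fix x assume x: "x \<in> space (PiM I M)"
    have sp: "merge I J (x, y) \<in> space (PiM (I\<union>J) M)" if "y \<in> space (PiM J M)" for y
      using measurable_space[OF measurable_merge[of I J M], of "(x,y)"] x that
      by (simp add: space_pair_measure)
    have m1: "\<Phi>1 (merge I J (x, y)) = \<Phi>1 x" for y
      using d1[of "merge I J (x, y)"] d1[of x] IJ by simp
    have m2: "\<Phi>2 (merge I J (x, y)) = \<Phi>2 y" for y
      using d2[of "merge I J (x, y)"] d2[of y] IJ by simp
    have "(\<lambda>y. merge I J (x, y)) -` {y\<in>space (PiM (I\<union>J) M). \<Phi>1 y \<and> \<Phi>2 y} \<inter> space (PiM J M)
        = (if \<Phi>1 x then {y\<in>space (PiM J M). \<Phi>2 y} else {})"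
      using sp m1 m2 by auto
    then show "emeasure (PiM J M) ((\<lambda>y. merge I J (x, y)) -` {y\<in>space (PiM (I\<union>J) M). \<Phi>1 y \<and> \<Phi>2 y} \<inter> space (PiM J M))
       = emeasure (PiM J M) {y\<in>space (PiM J M). \<Phi>2 y} * indicator {y\<in>space (PiM I M). \<Phi>1 y} x"
      using x by (auto split: split_indicator)
  qed
  also have "\<dots> = emeasure (PiM J M) {y\<in>space (PiM J M). \<Phi>2 y} * emeasure (PiM I M) {y\<in>space (PiM I M). \<Phi>1 y}"
    using S1 by (simp add: nn_integral_cmult)
  also have "emeasure (PiM J M) {y\<in>space (PiM J M). \<Phi>2 y} = emeasure (PiM UNIV M) {x\<in>space (PiM UNIV M). \<Phi>2 x}"
    by (rule transfer_fin[OF M J d2 S2, symmetric])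
  also have "emeasure (PiM I M) {y\<in>space (PiM I M). \<Phi>1 y} = emeasure (PiM UNIV M) {x\<in>space (PiM UNIV M). \<Phi>1 x}"
    by (rule transfer_fin[OF M I d1 S1, symmetric])
  finally show ?thesis by (simp add: mult.commute)
qed

lemma null_transfer:
  fixes M N :: "nat \<Rightarrow> real measure"
  assumes M: "\<And>i. prob_space (M i)" and N: "\<And>i. prob_space (N i)"
    and sM: "\<And>i. sets (M i) = sets borel" and sN: "\<And>i. sets (N i) = sets borel"
    and J: "finite J"
    and ac: "\<And>i B. i \<in> J \<Longrightarrow> B \<in> null_sets (M i) \<Longrightarrow> B \<in> null_sets (N i)"
    and A: "A \<in> null_sets (PiM J M)"
  shows "A \<in> null_sets (PiM J N)"
  using J ac A
proof (induction J arbitrary: A rule: finite_induct)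
  case empty
  then show ?case by (simp add: PiM_empty)
next
  case (insert i J)
  interpret PM: product_prob_space M UNIV by (rule product_prob_spaceI[OF M])
  interpret PN: product_prob_space N UNIV by (rule product_prob_spaceI[OF N])
  have spM: "space (M k) = UNIV" for k using sets_eq_imp_space_eq[OF sM[of k]] by simp
  have spN: "space (N k) = UNIV" for k using sets_eq_imp_space_eq[OF sN[of k]] by simp
  have setsMN: "sets (PiM K M) = sets (PiM K N)" for K
    by (rule sets_PiM_cong) (auto simp: sM sN)
  have spaceMN: "space (PiM K M) = space (PiM K N)" for K
    by (simp add: space_PiM spM spN)
  have AM: "A \<in> sets (PiM (insert i J) M)" using insert.prems(2) by auto
  have AN: "A \<in> sets (PiM (insert i J) N)" using AM setsMN by simp
  define gM where "gM y = (\<integral>\<^sup>+z. indicator A (y(i:=z)) \<partial>M i)" for y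
  define gN where "gN y = (\<integral>\<^sup>+z. indicator A (y(i:=z)) \<partial>N i)" for y
  have iM[measurable]: "(indicator A :: _ \<Rightarrow> ennreal) \<in> borel_measurable (PiM (insert i J) M)"
    using AM by simp
  have iN[measurable]: "(indicator A :: _ \<Rightarrow> ennreal) \<in> borel_measurable (PiM (insert i J) N)"
    using AN by simp
  have gMm[measurable]: "gM \<in> borel_measurable (PiM J M)" unfolding gM_def by measurable
  have gNm[measurable]: "gN \<in> borel_measurable (PiM J N)" unfolding gN_def by measurable
  have "emeasure (PiM (insert i J) M) A = (\<integral>\<^sup>+x. indicator A x \<partial>PiM (insert i J) M)"
    using AM by simp
  also have "\<dots> = (\<integral>\<^sup>+y. gM y \<partial>PiM J M)"
    unfolding gM_def by (rule PM.product_nn_integral_insert) (use insert.hyps in auto)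
  finally have "(\<integral>\<^sup>+y. gM y \<partial>PiM J M) = 0" using insert.prems(2) by (metis null_setsD1)
  then have "AE y in PiM J M. gM y = 0" by (simp add: nn_integral_0_iff_AE)
  then have Z: "{y\<in>space (PiM J M). gM y \<noteq> 0} \<in> null_sets (PiM J M)"
    by (subst (asm) AE_iff_null) auto
  have ZN: "{y\<in>space (PiM J M). gM y \<noteq> 0} \<in> null_sets (PiM J N)"
    by (rule insert.IH[OF _ Z]) (use insert.prems in auto)
  have key: "gN y = 0" if y: "y \<in> space (PiM J M)" and g0: "gM y = 0" for y
  proof -
    have um: "(\<lambda>v. y(i := v)) \<in> measurable (M i) (Pi\<^sub>M (insert i J) M)"
      by (rule measurable_component_update[OF y insert.hyps(2)])
    have yN: "y \<in> space (PiM J N)" using y spaceMN by simp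
    have umN: "(\<lambda>v. y(i := v)) \<in> measurable (N i) (Pi\<^sub>M (insert i J) N)"
      by (rule measurable_component_update[OF yN insert.hyps(2)])
    have fm: "(\<lambda>z. indicator A (y(i:=z)) :: ennreal) \<in> borel_measurable (M i)"
      using measurable_comp[OF um iM] by (simp add: comp_def)
    have fn: "(\<lambda>z. indicator A (y(i:=z)) :: ennreal) \<in> borel_measurable (N i)"
      using measurable_comp[OF umN iN] by (simp add: comp_def)
    have "AE z in M i. (indicator A (y(i:=z)) :: ennreal) = 0"
      using g0 fm unfolding gM_def by (simp add: nn_integral_0_iff_AE)
    then have B: "{z\<in>space (M i). \<not> (indicator A (y(i:=z)) :: ennreal) = 0} \<in> null_sets (M i)"
      using fm by (subst (asm) AE_iff_null) auto
    have "{z\<in>space (M i). \<not> (indicator A (y(i:=z)) :: ennreal) = 0} \<in> null_sets (N i)"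
      by (rule insert.prems(1)[OF _ B]) simp
    then have "AE z in N i. (indicator A (y(i:=z)) :: ennreal) = 0"
      using fn by (subst AE_iff_null) (auto simp: spM spN)
    then show ?thesis using fn unfolding gN_def by (simp add: nn_integral_0_iff_AE)
  qed
  have "AE y in PiM J N. gN y = 0"
    by (rule AE_I'[OF ZN]) (use key spaceMN in auto)
  then have "(\<integral>\<^sup>+y. gN y \<partial>PiM J N) = 0" by (simp add: nn_integral_0_iff_AE)
  moreover have "emeasure (PiM (insert i J) N) A = (\<integral>\<^sup>+y. gN y \<partial>PiM J N)"
  proof -
    have "emeasure (PiM (insert i J) N) A = (\<integral>\<^sup>+x. indicator A x \<partial>PiM (insert i J) N)"
      using AN by simp
    also have "\<dots> = (\<integral>\<^sup>+y. gN y \<partial>PiM J N)"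
      unfolding gN_def by (rule PN.product_nn_integral_insert) (use insert.hyps in auto)
    finally show ?thesis .
  qed
  ultimately show ?case using AN by (simp add: null_setsI)
qed




definition Mf :: "(real \<Rightarrow> real) \<Rightarrow> (real \<Rightarrow> real) \<Rightarrow> nat \<Rightarrow> enat \<Rightarrow> nat \<Rightarrow> real measure" where
  "Mf f0 f1 m v n = density lborel (\<lambda>t. ennreal (obs_density f0 f1 m v n t))"

lemma P_cp_Mf: "P_cp f0 f1 m v = PiM UNIV (Mf f0 f1 m v)"
  unfolding P_cp_def Mf_def[abs_def] by (rule refl)

lemma S_restrict:
  assumes "{n+1-m..n} \<subseteq> K"
  shows "S_stat f0 f1 m n (restrict x K) = S_stat f0 f1 m n x"
  unfolding S_stat_def using assms by (intro sum.cong) auto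

lemma S_shift:
  assumes "m \<le> n + 1"
  shows "S_stat f0 f1 m n (\<lambda>i. x (i + k)) = S_stat f0 f1 m (n + k) x"
proof -
  have e: "{n + k + 1 - m..n + k} = {(n+1-m) + k..n + k}" using assms by auto
  have "S_stat f0 f1 m (n + k) x = (\<Sum>i = (n+1-m)+k..n+k. llr f0 f1 (x i))"
    unfolding S_stat_def e by simp
  also have "\<dots> = (\<Sum>i = n+1-m..n. llr f0 f1 (x (i+k)))"
    by (rule sum.shift_bounds_cl_nat_ivl)
  finally show ?thesis unfolding S_stat_def by simp
qed

locale cp =
  fixes f0 f1 :: "real \<Rightarrow> real" and m :: nat
  assumes m1: "1 \<le> m"
    and f0m[measurable]: "f0 \<in> borel_measurable borel" and f1m[measurable]: "f1 \<in> borel_measurable borel"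
    and nn0: "\<And>t. 0 \<le> f0 t" and nn1: "\<And>t. 0 \<le> f1 t"
    and pr0: "prob_space (density lborel (\<lambda>t. ennreal (f0 t)))"
    and pr1: "prob_space (density lborel (\<lambda>t. ennreal (f1 t)))"
    and ae0: "AE t in density lborel (\<lambda>t. ennreal (f0 t)). 0 < f0 t \<and> 0 < f1 t"
    and ae1: "AE t in density lborel (\<lambda>t. ennreal (f1 t)). 0 < f0 t \<and> 0 < f1 t"

context cp begin

lemma Mf_eq: "Mf f0 f1 m v n = (if v \<le> enat n \<and> enat n < v + enat m
   then density lborel (\<lambda>t. ennreal (f1 t)) else density lborel (\<lambda>t. ennreal (f0 t)))"
  unfolding Mf_def obs_density_def by auto

lemma Mf_prob: "prob_space (Mf f0 f1 m v n)"
  using pr0 pr1 by (simp add: Mf_eq)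

lemma Mf_sets: "sets (Mf f0 f1 m v n) = sets borel"
  by (simp add: Mf_eq)

lemma Mf_space: "space (Mf f0 f1 m v n) = UNIV"
  using sets_eq_imp_space_eq[OF Mf_sets] by simp

lemma Mf_inf: "Mf f0 f1 m \<infinity> n = density lborel (\<lambda>t. ennreal (f0 t))"
  by (simp add: Mf_eq)

lemma llr_meas[measurable]: "llr f0 f1 \<in> borel_measurable borel"
  unfolding llr_def[abs_def] by measurable

lemma S_meas:
  assumes "{n+1-m..n} \<subseteq> K"
  shows "S_stat f0 f1 m n \<in> borel_measurable (PiM K (Mf f0 f1 m v))"
  unfolding S_stat_def[abs_def]
proof (intro borel_measurable_sum)
  fix i assume "i \<in> {n+1-m..n}"
  then have iK: "i \<in> K" using assms by auto
  have "(\<lambda>x. x i) \<in> measurable (PiM K (Mf f0 f1 m v)) borel"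
    using measurable_component_singleton[OF iK, of "Mf f0 f1 m v"]
    by (simp add: measurable_cong_sets[OF refl Mf_sets])
  then show "(\<lambda>x. llr f0 f1 (x i)) \<in> borel_measurable (PiM K (Mf f0 f1 m v))"
    by measurable
qed

lemma S_less_sets:
  assumes "{n+1-m..n} \<subseteq> K"
  shows "{x\<in>space (PiM K (Mf f0 f1 m v)). S_stat f0 f1 m n x < h} \<in> sets (PiM K (Mf f0 f1 m v))"
    "{x\<in>space (PiM K (Mf f0 f1 m v)). S_stat f0 f1 m n x \<le> h} \<in> sets (PiM K (Mf f0 f1 m v))"
    "{x\<in>space (PiM K (Mf f0 f1 m v)). S_stat f0 f1 m n x = h} \<in> sets (PiM K (Mf f0 f1 m v))"
  using S_meas[OF assms, of v] by measurable


lemma P_prob: "prob_space (PiM K (Mf f0 f1 m v))"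
  by (intro prob_space_PiM Mf_prob)

lemma T_ge: "enat k \<le> T_FMA f0 f1 m h x \<longleftrightarrow> (\<forall>n. m \<le> n \<and> h \<le> S_stat f0 f1 m n x \<longrightarrow> k \<le> n)"
  unfolding T_FMA_def by (auto simp: le_Inf_iff)

lemma T_less: "T_FMA f0 f1 m h x < enat k \<longleftrightarrow> (\<exists>n. m \<le> n \<and> h \<le> S_stat f0 f1 m n x \<and> n < k)"
  unfolding T_FMA_def by (auto simp: Inf_less_iff)

lemma F0_mono:
  assumes "h1 \<le> h2" shows "F0_cdf f0 f1 m h1 \<le> F0_cdf f0 f1 m h2"
proof -
  interpret prob_space "PiM UNIV (Mf f0 f1 m \<infinity>)" by (rule P_prob)
  show ?thesis unfolding F0_cdf_def P_cp_Mf
    by (rule finite_measure_mono) (use assms S_less_sets(2)[of m UNIV] in auto)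
qed

lemma beta_mono:
  assumes "h1 \<le> h2" shows "beta_md f0 f1 m h1 \<le> beta_md f0 f1 m h2"
proof -
  interpret prob_space "PiM UNIV (Mf f0 f1 m (enat 1))" by (rule P_prob)
  show ?thesis unfolding beta_md_def P_cp_Mf
    by (rule finite_measure_mono) (use assms S_less_sets(1)[of m UNIV] in auto)
qed

lemma Pinf_shift:
  assumes "m \<le> n"
  shows "measure (PiM UNIV (Mf f0 f1 m \<infinity>)) {x\<in>space (PiM UNIV (Mf f0 f1 m \<infinity>)). S_stat f0 f1 m n x < h}
       = measure (PiM UNIV (Mf f0 f1 m \<infinity>)) {x\<in>space (PiM UNIV (Mf f0 f1 m \<infinity>)). S_stat f0 f1 m m x < h}"
proof -
  define k where "k = n - m"
  have eqM: "(\<lambda>i. Mf f0 f1 m \<infinity> (i + k)) = Mf f0 f1 m \<infinity>" by (rule ext) (simp add: Mf_inf)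
  have "emeasure (PiM UNIV (Mf f0 f1 m \<infinity>)) {x\<in>space (PiM UNIV (Mf f0 f1 m \<infinity>)). S_stat f0 f1 m m (\<lambda>i. x (i+k)) < h}
     = emeasure (PiM UNIV (\<lambda>i. Mf f0 f1 m \<infinity> (i + k))) {y\<in>space (PiM UNIV (\<lambda>i. Mf f0 f1 m \<infinity> (i + k))). S_stat f0 f1 m m y < h}"
    by (rule shift_PiM[OF Mf_prob]) (use S_less_sets(1)[of m UNIV] in \<open>simp add: eqM\<close>)
  moreover have "S_stat f0 f1 m m (\<lambda>i. x (i+k)) = S_stat f0 f1 m n x" for x
    using S_shift[of m m f0 f1 x k] assms by (simp add: k_def)
  ultimately show ?thesis unfolding measure_def eqM by simp
qed

end

locale cpb = cp +
  assumes bij: "bij_betw (F0_cdf f0 f1 m) UNIV {0<..<1}"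

context cpb begin

lemma F0_range: "0 < F0_cdf f0 f1 m h" "F0_cdf f0 f1 m h < 1"
  using bij_betw_apply[OF bij, of h] by auto

lemma F0_strict:
  assumes "h1 < h2" shows "F0_cdf f0 f1 m h1 < F0_cdf f0 f1 m h2"
proof -
  have "F0_cdf f0 f1 m h1 \<noteq> F0_cdf f0 f1 m h2"
    using bij_betw_imp_inj_on[OF bij] assms by (metis inj_onD iso_tuple_UNIV_I less_irrefl)
  then show ?thesis using F0_mono[of h1 h2] assms by simp
qed

lemma G_eq_F0:
  "measure (PiM UNIV (Mf f0 f1 m \<infinity>)) {x\<in>space (PiM UNIV (Mf f0 f1 m \<infinity>)). S_stat f0 f1 m m x < h}
   = F0_cdf f0 f1 m h"
proof -
  interpret prob_space "PiM UNIV (Mf f0 f1 m \<infinity>)" by (rule P_prob)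
  define G where "G = measure (PiM UNIV (Mf f0 f1 m \<infinity>)) {x\<in>space (PiM UNIV (Mf f0 f1 m \<infinity>)). S_stat f0 f1 m m x < h}"
  have F0e: "F0_cdf f0 f1 m t = measure (PiM UNIV (Mf f0 f1 m \<infinity>)) {x\<in>space (PiM UNIV (Mf f0 f1 m \<infinity>)). S_stat f0 f1 m m x \<le> t}" for t
    unfolding F0_cdf_def P_cp_Mf ..
  have up: "G \<le> F0_cdf f0 f1 m h" unfolding G_def F0e
    by (rule finite_measure_mono) (use S_less_sets(2)[of m UNIV] in auto)
  have low: "F0_cdf f0 f1 m t \<le> G" if "t < h" for t unfolding G_def F0e
    by (rule finite_measure_mono) (use that S_less_sets(1)[of m UNIV] in auto)
  have "\<not> G < F0_cdf f0 f1 m h"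
  proof
    assume lt: "G < F0_cdf f0 f1 m h"
    define d where "d = (G + F0_cdf f0 f1 m h) / 2"
    have G0: "0 \<le> G" unfolding G_def by simp
    have "d \<in> {0<..<1}" using lt G0 F0_range[of h] by (auto simp: d_def)
    then obtain t where t: "F0_cdf f0 f1 m t = d"
      using bij_betw_imp_surj_on[OF bij] by (metis UNIV_I imageE)
    show False
    proof (cases "h \<le> t")
      case True then show False using F0_mono[OF True] t lt by (simp add: d_def)
    next
      case False then show False using low[of t] t lt by (simp add: d_def)
    qed
  qed
  then show ?thesis using up unfolding G_def by simp
qed

lemma Pinf_less:
  assumes "m \<le> n"
  shows "measure (PiM UNIV (Mf f0 f1 m \<infinity>)) {x\<in>space (PiM UNIV (Mf f0 f1 m \<infinity>)). S_stat f0 f1 m n x < h}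
       = F0_cdf f0 f1 m h"
  using Pinf_shift[OF assms] G_eq_F0 by simp


lemma window_bound:
  "measure (P_cp f0 f1 m \<infinity>) {x\<in>space (P_cp f0 f1 m \<infinity>). enat l \<le> T_FMA f0 f1 m h x \<and> T_FMA f0 f1 m h x < enat (l + ma)}
    \<le> 1 - F0_cdf f0 f1 m h ^ ma"
proof -
  let ?M = "Mf f0 f1 m \<infinity>"
  let ?P = "PiM UNIV ?M"
  interpret prob_space ?P by (rule P_prob)
  define W where "W = {max l m..<l+ma}"
  define J where "J = {..<l+ma}"
  have fW: "finite W" and fJ: "finite J" by (auto simp: W_def J_def)
  have cJ: "{n+1-m..n} \<subseteq> J" if "n \<in> W" for n using that by (auto simp: W_def J_def)
  define B where "B = {x\<in>space ?P. \<forall>n\<in>W. S_stat f0 f1 m n x < h}"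
  have Bs: "B \<in> sets ?P" unfolding B_def
    by (rule sets.sets_Collect_finite_All[OF _ fW]) (rule S_less_sets(1), auto)
  have sub: "{x\<in>space ?P. enat l \<le> T_FMA f0 f1 m h x \<and> T_FMA f0 f1 m h x < enat (l + ma)} \<subseteq> space ?P - B"
  proof safe
    fix x assume x: "x \<in> space ?P" and le: "enat l \<le> T_FMA f0 f1 m h x"
      and lt: "T_FMA f0 f1 m h x < enat (l + ma)" and xB: "x \<in> B"
    obtain n where n: "m \<le> n" "h \<le> S_stat f0 f1 m n x" "n < l + ma" using lt by (auto simp: T_less)
    have "l \<le> n" using le n by (auto simp: T_ge)
    then have "n \<in> W" using n by (auto simp: W_def)
    then show False using xB n by (auto simp: B_def)
  qed
  have "measure ?P {x\<in>space ?P. enat l \<le> T_FMA f0 f1 m h x \<and> T_FMA f0 f1 m h x < enat (l + ma)}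
      \<le> measure ?P (space ?P - B)"
    by (rule finite_measure_mono[OF sub]) (use Bs in auto)
  also have "\<dots> = 1 - measure ?P B" by (rule prob_compl[OF Bs])
  finally have A: "measure ?P {x\<in>space ?P. enat l \<le> T_FMA f0 f1 m h x \<and> T_FMA f0 f1 m h x < enat (l + ma)}
      \<le> 1 - measure ?P B" .
  have BJ: "{y\<in>space (PiM J ?M). \<forall>n\<in>W. S_stat f0 f1 m n y < h} \<in> sets (PiM J ?M)"
    by (rule sets.sets_Collect_finite_All[OF _ fW]) (rule S_less_sets(1), use cJ in auto)
  have "emeasure ?P B = emeasure (PiM J ?M) {y\<in>space (PiM J ?M). \<forall>n\<in>W. S_stat f0 f1 m n y < h}"
    unfolding B_def by (rule transfer_fin[OF Mf_prob fJ _ BJ]) (use cJ S_restrict in auto)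
  also have "\<dots> \<ge> (\<Prod>n\<in>W. emeasure (PiM J ?M) {y\<in>space (PiM J ?M). S_stat f0 f1 m n y < h})"
  proof (rule harris_prod[OF Mf_prob fJ fW, where w="\<lambda>i t. - llr f0 f1 t"])
    fix n assume "n \<in> W"
    then show "{x\<in>space (PiM J ?M). S_stat f0 f1 m n x < h} \<in> sets (PiM J ?M)"
      using cJ by (intro S_less_sets(1)) auto
  next
    fix n x y assume n: "n \<in> W" and mon: "\<forall>i\<in>J. - llr f0 f1 (x i) \<le> - llr f0 f1 (y i)"
      and xl: "S_stat f0 f1 m n x < h"
    have "S_stat f0 f1 m n y \<le> S_stat f0 f1 m n x"
      unfolding S_stat_def using mon cJ[OF n] by (intro sum_mono) auto
    then show "S_stat f0 f1 m n y < h" using xl by simp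
  qed
  also have "(\<Prod>n\<in>W. emeasure (PiM J ?M) {y\<in>space (PiM J ?M). S_stat f0 f1 m n y < h})
     = (\<Prod>n\<in>W. ennreal (F0_cdf f0 f1 m h))"
  proof (rule prod.cong[OF refl])
    fix n assume n: "n \<in> W"
    have "emeasure (PiM J ?M) {y\<in>space (PiM J ?M). S_stat f0 f1 m n y < h}
        = emeasure ?P {x\<in>space ?P. S_stat f0 f1 m n x < h}"
      by (rule transfer_fin[OF Mf_prob fJ _ S_less_sets(1), symmetric]) (use cJ[OF n] S_restrict in auto)
    also have "\<dots> = ennreal (F0_cdf f0 f1 m h)"
      using Pinf_less[of n h] n by (simp add: emeasure_eq_measure W_def)
    finally show "emeasure (PiM J ?M) {y\<in>space (PiM J ?M). S_stat f0 f1 m n y < h} = ennreal (F0_cdf f0 f1 m h)" .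
  qed
  also have "\<dots> = ennreal (F0_cdf f0 f1 m h ^ card W)"
    using F0_range[of h] by (simp add: prod_ennreal[symmetric] ennreal_power)
  finally have "ennreal (F0_cdf f0 f1 m h ^ card W) \<le> ennreal (measure ?P B)"
    by (simp add: emeasure_eq_measure)
  then have B1: "F0_cdf f0 f1 m h ^ card W \<le> measure ?P B"
    by (simp add: ennreal_le_iff)
  have "card W \<le> ma" by (simp add: W_def)
  then have "F0_cdf f0 f1 m h ^ ma \<le> F0_cdf f0 f1 m h ^ card W"
    using F0_range[of h] by (intro power_decreasing) auto
  with A B1 show ?thesis unfolding P_cp_Mf by simp
qed

lemma Pfa_bound: "P_fa (P_cp f0 f1 m) (T_FMA f0 f1 m h) ma \<le> 1 - F0_cdf f0 f1 m h ^ ma"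
  unfolding P_fa_def by (rule cSUP_least) (auto intro: window_bound)

end




context cpb begin

lemma part2:
  "beta_md f0 f1 m h = F1_cdf f0 f1 m h"
proof -
  let ?Mi = "Mf f0 f1 m \<infinity>" and ?M1 = "Mf f0 f1 m (enat 1)"
  define J where "J = {1..m}"
  have fJ: "finite J" by (simp add: J_def)
  have cJ: "{m+1-m..m} \<subseteq> J" by (auto simp: J_def)
  have dep: "\<And>x. (S_stat f0 f1 m m (restrict x J) = h) = (S_stat f0 f1 m m x = h)"
    using S_restrict[OF cJ] by simp
  interpret Pi: prob_space "PiM UNIV ?Mi" by (rule P_prob)
  interpret P1: prob_space "PiM UNIV ?M1" by (rule P_prob)
  have le_sets: "{x\<in>space (PiM UNIV ?Mi). S_stat f0 f1 m m x \<le> h} \<in> sets (PiM UNIV ?Mi)"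
    and lt_sets: "{x\<in>space (PiM UNIV ?Mi). S_stat f0 f1 m m x < h} \<in> sets (PiM UNIV ?Mi)"
    by (rule S_less_sets(2), simp) (rule S_less_sets(1), simp)
  have eqset: "{x\<in>space (PiM UNIV ?Mi). S_stat f0 f1 m m x = h}
      = {x\<in>space (PiM UNIV ?Mi). S_stat f0 f1 m m x \<le> h} - {x\<in>space (PiM UNIV ?Mi). S_stat f0 f1 m m x < h}"
    by auto
  have D: "measure (PiM UNIV ?Mi) {x\<in>space (PiM UNIV ?Mi). S_stat f0 f1 m m x = h}
      = measure (PiM UNIV ?Mi) {x\<in>space (PiM UNIV ?Mi). S_stat f0 f1 m m x \<le> h}
        - measure (PiM UNIV ?Mi) {x\<in>space (PiM UNIV ?Mi). S_stat f0 f1 m m x < h}"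
    unfolding eqset by (rule Pi.finite_measure_Diff[OF le_sets lt_sets]) auto
  have F0e: "F0_cdf f0 f1 m h = measure (PiM UNIV ?Mi) {x\<in>space (PiM UNIV ?Mi). S_stat f0 f1 m m x \<le> h}"
    unfolding F0_cdf_def P_cp_Mf ..
  have "measure (PiM UNIV ?Mi) {x\<in>space (PiM UNIV ?Mi). S_stat f0 f1 m m x = h} = 0"
    unfolding D G_eq_F0 F0e[symmetric] by simp
  then have "emeasure (PiM UNIV ?Mi) {x\<in>space (PiM UNIV ?Mi). S_stat f0 f1 m m x = h} = 0"
    by (simp add: Pi.emeasure_eq_measure)
  then have "emeasure (PiM J ?Mi) {y\<in>space (PiM J ?Mi). S_stat f0 f1 m m y = h} = 0"
    using transfer_fin[OF Mf_prob fJ dep S_less_sets(3)[OF cJ]] by simp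
  then have N0: "{y\<in>space (PiM J ?Mi). S_stat f0 f1 m m y = h} \<in> null_sets (PiM J ?Mi)"
    using S_less_sets(3)[OF cJ] by (auto intro: null_setsI)
  have ac: "B \<in> null_sets (?M1 i)" if i: "i \<in> J" and B: "B \<in> null_sets (?Mi i)" for i B
  proof -
    have e0: "?Mi i = density lborel (\<lambda>t. ennreal (f0 t))" by (simp add: Mf_inf)
    have e1: "?M1 i = density lborel (\<lambda>t. ennreal (f1 t))" using i by (simp add: Mf_eq J_def)
    have "B \<in> sets lborel \<and> (AE x in lborel. x \<in> B \<longrightarrow> ennreal (f0 x) = 0)"
      using B unfolding e0 by (subst (asm) null_sets_density_iff) auto
    moreover have "AE x in lborel. 0 < ennreal (f1 x) \<longrightarrow> (0 < f0 x \<and> 0 < f1 x)"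
      using ae1 by (subst (asm) AE_density) auto
    ultimately have "B \<in> sets lborel \<and> (AE x in lborel. x \<in> B \<longrightarrow> ennreal (f1 x) = 0)"
    proof (intro conjI)
      assume a: "B \<in> sets lborel \<and> (AE x in lborel. x \<in> B \<longrightarrow> ennreal (f0 x) = 0)"
        and b: "AE x in lborel. 0 < ennreal (f1 x) \<longrightarrow> (0 < f0 x \<and> 0 < f1 x)"
      show "B \<in> sets lborel" using a by simp
      from a have a2: "AE x in lborel. x \<in> B \<longrightarrow> ennreal (f0 x) = 0" by simp
      from a2 b show "AE x in lborel. x \<in> B \<longrightarrow> ennreal (f1 x) = 0"
        by eventually_elim (auto simp: ennreal_eq_0_iff)
    qed
    then show ?thesis unfolding e1 by (subst null_sets_density_iff) auto
  qed
  have N1: "{y\<in>space (PiM J ?Mi). S_stat f0 f1 m m y = h} \<in> null_sets (PiM J ?M1)"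
    by (rule null_transfer[OF Mf_prob Mf_prob Mf_sets Mf_sets fJ ac N0])
  have spJ: "space (PiM J ?Mi) = space (PiM J ?M1)" by (simp add: space_PiM Mf_space)
  have "emeasure (PiM UNIV ?M1) {x\<in>space (PiM UNIV ?M1). S_stat f0 f1 m m x = h}
      = emeasure (PiM J ?M1) {y\<in>space (PiM J ?M1). S_stat f0 f1 m m y = h}"
    by (rule transfer_fin[OF Mf_prob fJ dep S_less_sets(3)[OF cJ]])
  also have "\<dots> = 0" using N1 spJ by auto
  finally have E0: "measure (PiM UNIV ?M1) {x\<in>space (PiM UNIV ?M1). S_stat f0 f1 m m x = h} = 0"
    by (simp add: measure_def)
  have "{x\<in>space (PiM UNIV ?M1). S_stat f0 f1 m m x \<le> h}
      = {x\<in>space (PiM UNIV ?M1). S_stat f0 f1 m m x < h} \<union> {x\<in>space (PiM UNIV ?M1). S_stat f0 f1 m m x = h}"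
    by auto
  then have "measure (PiM UNIV ?M1) {x\<in>space (PiM UNIV ?M1). S_stat f0 f1 m m x \<le> h}
      = measure (PiM UNIV ?M1) {x\<in>space (PiM UNIV ?M1). S_stat f0 f1 m m x < h}
        + measure (PiM UNIV ?M1) {x\<in>space (PiM UNIV ?M1). S_stat f0 f1 m m x = h}"
  proof -
    have s1: "{x\<in>space (PiM UNIV ?M1). S_stat f0 f1 m m x < h} \<in> sets (PiM UNIV ?M1)"
      by (rule S_less_sets(1)) simp
    have s3: "{x\<in>space (PiM UNIV ?M1). S_stat f0 f1 m m x = h} \<in> sets (PiM UNIV ?M1)"
      by (rule S_less_sets(3)) simp
    assume eq: "{x\<in>space (PiM UNIV ?M1). S_stat f0 f1 m m x \<le> h}
      = {x\<in>space (PiM UNIV ?M1). S_stat f0 f1 m m x < h} \<union> {x\<in>space (PiM UNIV ?M1). S_stat f0 f1 m m x = h}"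
    show ?thesis unfolding eq by (rule P1.finite_measure_Union[OF s1 s3]) auto
  qed
  then show ?thesis using E0 by (simp add: beta_md_def F1_cdf_def P_cp_Mf)
qed


end




context cp begin

lemma md_ratio:
  assumes v: "1 \<le> v"
  shows "measure (P_cp f0 f1 m (enat v)) {x\<in>space (P_cp f0 f1 m (enat v)). enat (v + m) \<le> T_FMA f0 f1 m h x}
       / measure (P_cp f0 f1 m (enat v)) {x\<in>space (P_cp f0 f1 m (enat v)). enat v \<le> T_FMA f0 f1 m h x}
       \<le> beta_md f0 f1 m h"
proof -
  let ?M = "Mf f0 f1 m (enat v)"
  let ?P = "PiM UNIV ?M"
  interpret prob_space ?P by (rule P_prob)
  define I where "I = {..<v}"
  define J where "J = {v..<v+m}"
  define \<Phi>1 where "\<Phi>1 x = (\<forall>n\<in>{m..<v}. S_stat f0 f1 m n x < h)" for x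
  define \<Phi>2 where "\<Phi>2 x = (S_stat f0 f1 m (v+m-1) x < h)" for x
  have cI: "{n+1-m..n} \<subseteq> I" if "n \<in> {m..<v}" for n using that by (auto simp: I_def)
  have cJ: "{(v+m-1)+1-m..v+m-1} \<subseteq> J" using v m1 by (auto simp: J_def)
  have d1: "\<Phi>1 (restrict x I) = \<Phi>1 x" for x unfolding \<Phi>1_def using S_restrict[OF cI] by simp
  have d2: "\<Phi>2 (restrict x J) = \<Phi>2 x" for x unfolding \<Phi>2_def using S_restrict[OF cJ] by simp
  have S1: "{y\<in>space (PiM K ?M). \<Phi>1 y} \<in> sets (PiM K ?M)" if IK: "I \<subseteq> K" for K
  proof -
    have "{y\<in>space (PiM K ?M). S_stat f0 f1 m n y < h} \<in> sets (PiM K ?M)" if n: "n \<in> {m..<v}" for n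
      by (rule S_less_sets(1), rule subset_trans[OF cI[OF n] IK])
    then show ?thesis unfolding \<Phi>1_def by (intro sets.sets_Collect_finite_All) simp_all
  qed
  have S2: "{y\<in>space (PiM K ?M). \<Phi>2 y} \<in> sets (PiM K ?M)" if JK: "J \<subseteq> K" for K
    unfolding \<Phi>2_def by (rule S_less_sets(1), rule subset_trans[OF cJ JK])
  have S12K: "{y\<in>space (PiM K ?M). \<Phi>1 y \<and> \<Phi>2 y} \<in> sets (PiM K ?M)" if "I \<subseteq> K" "J \<subseteq> K" for K
  proof -
    have "{y\<in>space (PiM K ?M). \<Phi>1 y \<and> \<Phi>2 y} = {y\<in>space (PiM K ?M). \<Phi>1 y} \<inter> {y\<in>space (PiM K ?M). \<Phi>2 y}"
      by blast
    then show ?thesis using sets.Int[OF S1[OF that(1)] S2[OF that(2)]] by simp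
  qed
  have S12: "{y\<in>space (PiM (I\<union>J) ?M). \<Phi>1 y \<and> \<Phi>2 y} \<in> sets (PiM (I\<union>J) ?M)"
    by (rule S12K) auto
  have ind: "emeasure ?P {x\<in>space ?P. \<Phi>1 x \<and> \<Phi>2 x} = emeasure ?P {x\<in>space ?P. \<Phi>1 x} * emeasure ?P {x\<in>space ?P. \<Phi>2 x}"
    by (rule indep_fin[OF Mf_prob _ _ _ d1 d2 S1 S2 S12]) (auto simp: I_def J_def)
  have indm: "measure ?P {x\<in>space ?P. \<Phi>1 x \<and> \<Phi>2 x} = measure ?P {x\<in>space ?P. \<Phi>1 x} * measure ?P {x\<in>space ?P. \<Phi>2 x}"
    using ind by (simp add: measure_def enn2real_mult)
  have den1: "enat v \<le> T_FMA f0 f1 m h x \<longleftrightarrow> \<Phi>1 x" for x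
    unfolding T_ge \<Phi>1_def
  proof
    assume A: "\<forall>n. m \<le> n \<and> h \<le> S_stat f0 f1 m n x \<longrightarrow> v \<le> n"
    show "\<forall>n\<in>{m..<v}. S_stat f0 f1 m n x < h"
    proof
      fix n assume n: "n \<in> {m..<v}"
      show "S_stat f0 f1 m n x < h"
      proof (rule ccontr)
        assume "\<not> S_stat f0 f1 m n x < h"
        then have "h \<le> S_stat f0 f1 m n x" by simp
        then have "v \<le> n" using A n by simp
        then show False using n by simp
      qed
    qed
  next
    assume B: "\<forall>n\<in>{m..<v}. S_stat f0 f1 m n x < h"
    show "\<forall>n. m \<le> n \<and> h \<le> S_stat f0 f1 m n x \<longrightarrow> v \<le> n"
    proof (intro allI impI)
      fix n assume n: "m \<le> n \<and> h \<le> S_stat f0 f1 m n x"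
      show "v \<le> n"
      proof (rule ccontr)
        assume "\<not> v \<le> n"
        then have "n \<in> {m..<v}" using n by simp
        then have "S_stat f0 f1 m n x < h" using B by blast
        then show False using n by simp
      qed
    qed
  qed
  have den: "{x\<in>space ?P. enat v \<le> T_FMA f0 f1 m h x} = {x\<in>space ?P. \<Phi>1 x}"
    using den1 by blast
  have num: "{x\<in>space ?P. enat (v+m) \<le> T_FMA f0 f1 m h x} \<subseteq> {x\<in>space ?P. \<Phi>1 x \<and> \<Phi>2 x}"
  proof safe
    fix x assume "x \<in> space ?P" and T: "enat (v+m) \<le> T_FMA f0 f1 m h x"
    have Tv: "enat v \<le> T_FMA f0 f1 m h x" using T order_trans[of "enat v" "enat (v+m)"] by simp
    then show "\<Phi>1 x" using den1 by blast
    have A: "\<forall>n. m \<le> n \<and> h \<le> S_stat f0 f1 m n x \<longrightarrow> v + m \<le> n" using T by (simp only: T_ge)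
    show "\<Phi>2 x" unfolding \<Phi>2_def
    proof (rule ccontr)
      assume "\<not> S_stat f0 f1 m (v + m - 1) x < h"
      then have "h \<le> S_stat f0 f1 m (v + m - 1) x" by simp
      moreover have "m \<le> v + m - 1" using v by simp
      ultimately have "v + m \<le> v + m - 1" using A by blast
      then show False using v m1 by simp
    qed
  qed
  have sh: "measure ?P {x\<in>space ?P. \<Phi>2 x} = beta_md f0 f1 m h"
  proof -
    define k where "k = v - 1"
    have eqM: "(\<lambda>i. ?M (i + k)) = Mf f0 f1 m (enat 1)"
      using v by (intro ext) (auto simp: Mf_eq k_def)
    have eS: "S_stat f0 f1 m m (\<lambda>i. x (i+k)) = S_stat f0 f1 m (v+m-1) x" for x
    proof -
      have mk: "m + k = v + m - 1" using v by (simp add: k_def)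
      show ?thesis using S_shift[of m m f0 f1 x k] unfolding mk by simp
    qed
    have "emeasure ?P {x\<in>space ?P. S_stat f0 f1 m m (\<lambda>i. x (i+k)) < h}
       = emeasure (PiM UNIV (\<lambda>i. ?M (i + k))) {y\<in>space (PiM UNIV (\<lambda>i. ?M (i + k))). S_stat f0 f1 m m y < h}"
      by (rule shift_PiM[OF Mf_prob]) (use S_less_sets(1)[of m UNIV] in \<open>simp add: eqM\<close>)
    then show ?thesis unfolding \<Phi>2_def eS eqM beta_md_def P_cp_Mf measure_def by simp
  qed
  have Pnum: "measure ?P {x\<in>space ?P. enat (v+m) \<le> T_FMA f0 f1 m h x} \<le> measure ?P {x\<in>space ?P. \<Phi>1 x} * beta_md f0 f1 m h"
  proof -
    have "measure ?P {x\<in>space ?P. enat (v+m) \<le> T_FMA f0 f1 m h x} \<le> measure ?P {x\<in>space ?P. \<Phi>1 x \<and> \<Phi>2 x}"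
      by (rule finite_measure_mono[OF num S12K]) auto
    then show ?thesis unfolding indm sh .
  qed
  have b0: "0 \<le> beta_md f0 f1 m h" by (simp add: beta_md_def)
  have goal: "measure ?P {x\<in>space ?P. enat (v+m) \<le> T_FMA f0 f1 m h x} / measure ?P {x\<in>space ?P. \<Phi>1 x} \<le> beta_md f0 f1 m h"
  proof (cases "measure ?P {x\<in>space ?P. \<Phi>1 x} = 0")
    case True then show ?thesis using b0 by simp
  next
    case False
    then have "0 < measure ?P {x\<in>space ?P. \<Phi>1 x}" using measure_nonneg[of ?P] by (simp add: less_le)
    then show ?thesis using Pnum by (simp add: divide_le_eq mult.commute)
  qed
  then show ?thesis unfolding P_cp_Mf den .
qed

lemma Pmd_bound: "P_md (P_cp f0 f1 m) (T_FMA f0 f1 m h) m \<le> beta_md f0 f1 m h"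
  unfolding P_md_def by (rule cSUP_least) (auto intro: md_ratio)


end




theorem corollary1:
  fixes m ma :: nat and f0 f1 :: "real \<Rightarrow> real" and a :: real
  assumes "1 \<le> m" and "1 \<le> ma"
    and "f0 \<in> borel_measurable borel" and "f1 \<in> borel_measurable borel"
    and "\<And>t. 0 \<le> f0 t" and "\<And>t. 0 \<le> f1 t"
    and "prob_space (density lborel (\<lambda>t. ennreal (f0 t)))"
    and "prob_space (density lborel (\<lambda>t. ennreal (f1 t)))"
    and "density lborel (\<lambda>t. ennreal (f0 t)) \<noteq> density lborel (\<lambda>t. ennreal (f1 t))"
    and "AE t in density lborel (\<lambda>t. ennreal (f0 t)). 0 < f0 t \<and> 0 < f1 t"
    and "AE t in density lborel (\<lambda>t. ennreal (f1 t)). 0 < f0 t \<and> 0 < f1 t"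
    and "bij_betw (F0_cdf f0 f1 m) UNIV {0<..<1}"
    and "0 < a" and "a < 1"
  shows "P_fa (P_cp f0 f1 m) (T_FMA f0 f1 m (h_thr f0 f1 m ma a)) ma \<le> a
       \<and> beta_md f0 f1 m (h_thr f0 f1 m ma a)
           = F1_cdf f0 f1 m (inv (F0_cdf f0 f1 m) ((1 - a) powr (1 / real ma)))
       \<and> (\<forall>h'. P_fa (P_cp f0 f1 m) (T_FMA f0 f1 m h') ma = a \<longrightarrow>
             P_md (P_cp f0 f1 m) (T_FMA f0 f1 m h') m \<le> beta_md f0 f1 m (h_thr f0 f1 m ma a))"
proof -
  have cpf: "cp f0 f1 m"
    using assms(1,3,4,5,6,7,8,10,11) by (rule cp.intro)
  interpret cpb f0 f1 m by (rule cpb.intro[OF cpf cpb_axioms.intro[OF assms(12)]])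
  have bij: "bij_betw (F0_cdf f0 f1 m) UNIV {0<..<1}" by fact
  define c where "c = (1 - a) powr (1 / real ma)"
  define h where "h = h_thr f0 f1 m ma a"
  have a1: "0 < 1 - a" "1 - a < 1" using assms by auto
  have ma0: "0 < ma" using assms by simp
  have c0: "0 < c" unfolding c_def using a1 by simp
  have c1: "c < 1"
  proof -
    have "(1 - a) powr (1 / real ma) < 1 powr (1 / real ma)"
      using a1 ma0 by (intro powr_less_mono2) auto
    then show ?thesis unfolding c_def by simp
  qed
  have cpow: "c ^ ma = 1 - a"
  proof -
    have "c ^ ma = c powr (real ma)" using c0 by (simp add: powr_realpow)
    also have "\<dots> = (1 - a) powr (1 / real ma * real ma)" unfolding c_def by (simp add: powr_powr)
    also have "\<dots> = 1 - a" using ma0 a1 by simp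
    finally show ?thesis .
  qed
  have hF: "F0_cdf f0 f1 m h = c"
    unfolding h_def h_thr_def c_def[symmetric]
    by (rule bij_betw_inv_into_right[OF bij]) (use c0 c1 in auto)
  have P1: "P_fa (P_cp f0 f1 m) (T_FMA f0 f1 m h) ma \<le> a"
    using Pfa_bound[of h ma] hF cpow by simp
  have P2: "beta_md f0 f1 m h = F1_cdf f0 f1 m (inv (F0_cdf f0 f1 m) ((1 - a) powr (1 / real ma)))"
    using part2[of h] unfolding h_def h_thr_def by simp
  have P3: "P_md (P_cp f0 f1 m) (T_FMA f0 f1 m h') m \<le> beta_md f0 f1 m h"
    if eq: "P_fa (P_cp f0 f1 m) (T_FMA f0 f1 m h') ma = a" for h'
  proof -
    have "h' \<le> h"
    proof (rule ccontr)
      assume "\<not> h' \<le> h"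
      then have "F0_cdf f0 f1 m h < F0_cdf f0 f1 m h'" by (intro F0_strict) simp
      then have "c ^ ma < F0_cdf f0 f1 m h' ^ ma"
        using hF c0 ma0 by (metis less_imp_le power_strict_mono)
      then have "P_fa (P_cp f0 f1 m) (T_FMA f0 f1 m h') ma < a"
        using Pfa_bound[of h' ma] cpow by simp
      then show False using eq by simp
    qed
    then have "beta_md f0 f1 m h' \<le> beta_md f0 f1 m h" by (rule beta_mono)
    then show ?thesis using Pmd_bound[of h'] by simp
  qed
  show ?thesis using P1 P2 P3 unfolding h_def by blast
qed


end
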